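(* Let $g\ge2$, let $q_i(x,y)=a_ix^2+2b_ixy+c_iy^2$ ($i=1,\ldots,g$) be integer binary quadratic forms, irreducible over the integers, with $a_i\equiv1\pmod4$, and let $D:=\prod_{p\le2g}p\prod_{k}a_kc_k\delta_k\prod_{i<j}\operatorname{Res}(q_i,q_j)$, assumed nonzero. Then for every prime $p$ and all non-negative integers $e_1,\ldots,e_g$, $$\rho^*(p^{e_1},\ldots,p^{e_g})\ll p^{\max(e_1,\ldots,e_g)},$$ with implied constant depending only on the forms; and if $p\nmid D$ then $\rho^*(p^{e_1},\ldots,p^{e_g})=0$ whenever $e_i>0$ and $e_j>0$ for some $i\ne j$.
   Context: $\delta_k$ is the discriminant of $q_k$ and $\operatorname{Res}$ the resultant. For positive integers $d_1,\ldots,d_g$: $\Lambda_{\mathbf d}:=\{\mathbf x\in\mathbb Z^2:d_i\mid q_i(\mathbf x)\ \forall i\}$, $\Lambda^*_{\mathbf d}:=\{\mathbf x\in\Lambda_{\mathbf d}:\gcd(x_1,x_2,d_1\cdots d_g)=1\}$, and $\rho^*(\mathbf d):=\#(\Lambda^*_{\mathbf d}\cap[0,d_1\cdots d_g)^2)$. *)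

theory Defs
  imports "HOL-Computational_Algebra.Computational_Algebra"
begin

definition qf :: "int \<Rightarrow> int \<Rightarrow> int \<Rightarrow> int \<Rightarrow> int \<Rightarrow> int" where
  "qf a b c x y = a * x^2 + 2 * b * x * y + c * y^2"

text \<open>Irreducibility of the form over the integers, via its dehomogenisation
  q(t,1) = a t^2 + 2 b t + c in Z[t] (for a \<noteq> 0 this is equivalent).\<close>
definition form_irreducible :: "int \<Rightarrow> int \<Rightarrow> int \<Rightarrow> bool" where
  "form_irreducible a b c \<longleftrightarrow> irreducible [:c, 2 * b, a:]"

definition disc_form :: "int \<Rightarrow> int \<Rightarrow> int \<Rightarrow> int" where
  "disc_form a b c = (2 * b)^2 - 4 * a * c"

text \<open>Resultant of the binary quadratic forms a1 x^2 + B1 xy + c1 y^2 and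
  a2 x^2 + B2 xy + c2 y^2 (Sylvester determinant), with B = 2 b.\<close>
definition res_form :: "int \<Rightarrow> int \<Rightarrow> int \<Rightarrow> int \<Rightarrow> int \<Rightarrow> int \<Rightarrow> int" where
  "res_form a1 b1 c1 a2 b2 c2 =
     (a1 * c2 - a2 * c1)^2 - (a1 * (2*b2) - a2 * (2*b1)) * ((2*b1) * c2 - (2*b2) * c1)"

definition rho_star :: "nat \<Rightarrow> (nat \<Rightarrow> int) \<Rightarrow> (nat \<Rightarrow> int) \<Rightarrow> (nat \<Rightarrow> int)
    \<Rightarrow> (nat \<Rightarrow> nat) \<Rightarrow> nat" where
  "rho_star g a b c d =
     (let N = int (\<Prod>i<g. d i) in
      card {(x, y) \<in> {0..<N} \<times> {0..<N}.
              (\<forall>i<g. int (d i) dvd qf (a i) (b i) (c i) x y) \<and> gcd (gcd x y) N = 1})"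

definition D_const :: "nat \<Rightarrow> (nat \<Rightarrow> int) \<Rightarrow> (nat \<Rightarrow> int) \<Rightarrow> (nat \<Rightarrow> int) \<Rightarrow> int" where
  "D_const g a b c =
     (\<Prod>p\<in>{p::nat. prime p \<and> p \<le> 2 * g}. int p)
     * (\<Prod>k<g. a k * c k * disc_form (a k) (b k) (c k))
     * (\<Prod>(i, j)\<in>{(i, j). i < j \<and> j < g}.
          res_form (a i) (b i) (c i) (a j) (b j) (c j))"

end

theory Submission
  imports Defs
begin

lemma pdvd_iff:
  fixes p z :: int
  assumes "prime p" "z \<noteq> 0"
  shows "p ^ n dvd z \<longleftrightarrow> n \<le> multiplicity p z"
proof -
  have "\<not> is_unit p" using assms(1) not_prime_unit by blast
  then show ?thesis by (rule power_dvd_iff_le_multiplicity[OF assms(2)])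
qed

lemma cancel_pow:
  fixes p a z :: int
  assumes "prime p" "a \<noteq> 0" "p ^ (k + multiplicity p a) dvd a * z"
  shows "p ^ k dvd z"
proof (cases "z = 0")
  case True then show ?thesis by simp
next
  case False
  have "multiplicity p (a * z) = multiplicity p a + multiplicity p z"
    using assms(1,2) False by (intro prime_elem_multiplicity_mult_distrib) auto
  moreover have "k + multiplicity p a \<le> multiplicity p (a * z)"
    using assms pdvd_iff[of p "a*z"] False by simp
  ultimately show ?thesis using pdvd_iff[OF assms(1) False] by simp
qed

lemma sqrt_lemma:
  fixes p u1 u2 \<Delta> :: int
  assumes p: "prime p" and D: "\<Delta> \<noteq> 0"
    and h1: "p ^ n dvd u1^2 - \<Delta>" and h2: "p ^ n dvd u2^2 - \<Delta>"
  shows "p ^ (n - multiplicity p (4*\<Delta>)) dvd u1 - u2 \<or> p ^ (n - multiplicity p (4*\<Delta>)) dvd u1 + u2"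
proof (rule ccontr)
  define s where "s = multiplicity p (4*\<Delta>)"
  assume "\<not> ?thesis"
  then have n1: "\<not> p ^ (n - s) dvd u1 - u2" and n2: "\<not> p ^ (n - s) dvd u1 + u2"
    by (auto simp: s_def)
  then have z1: "u1 - u2 \<noteq> 0" and z2: "u1 + u2 \<noteq> 0" by auto
  define \<alpha> where "\<alpha> = multiplicity p (u1 - u2)"
  define \<beta> where "\<beta> = multiplicity p (u1 + u2)"
  have a1: "\<alpha> < n - s" using n1 pdvd_iff[OF p z1] \<alpha>_def by auto
  have b1: "\<beta> < n - s" using n2 pdvd_iff[OF p z2] \<beta>_def by auto
  have "p ^ n dvd (u1 - u2) * (u1 + u2)"
  proof -
    have e: "(u1 - u2) * (u1 + u2) = (u1^2 - \<Delta>) - (u2^2 - \<Delta>)" by (simp add: algebra_simps power2_eq_square)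
    show ?thesis unfolding e using h1 h2 by (rule dvd_diff)
  qed
  moreover have "(u1 - u2) * (u1 + u2) \<noteq> 0" using z1 z2 by simp
  ultimately have "n \<le> multiplicity p ((u1 - u2) * (u1 + u2))"
    using pdvd_iff[OF p] by blast
  also have "\<dots> = \<alpha> + \<beta>" unfolding \<alpha>_def \<beta>_def
    by (rule prime_elem_multiplicity_mult_distrib[OF prime_imp_prime_elem[OF p] z1 z2])
  finally have nab: "n \<le> \<alpha> + \<beta>" .
  have "s + 1 \<le> \<alpha>" "s + 1 \<le> \<beta>" using nab a1 b1 by auto
  then have d1: "p ^ (s+1) dvd u1 - u2" and d2: "p ^ (s+1) dvd u1 + u2"
    using pdvd_iff[OF p z1, of "s+1"] pdvd_iff[OF p z2, of "s+1"] \<alpha>_def \<beta>_def by blast+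
  have "p ^ (s+1) dvd (u1 - u2) + (u1 + u2)" using d1 d2 by (rule dvd_add)
  moreover have "(u1 - u2) + (u1 + u2) = 2 * u1" by simp
  ultimately have "p ^ (s+1) dvd 2 * u1" by simp
  then have "(p ^ (s+1))^2 dvd (2 * u1)^2" by (rule dvd_power_same)
  moreover have "(p ^ (s+1))^2 = p ^ (2*s+2)"
    unfolding power_mult[symmetric] by (simp add: algebra_simps)
  moreover have "(2 * u1)^2 = 4 * u1^2" by (simp add: power_mult_distrib)
  ultimately have e1: "p ^ (2*s+2) dvd 4 * u1^2" by simp
  have "2*s+2 \<le> n" using nab a1 b1 by auto
  then have "p ^ (2*s+2) dvd u1^2 - \<Delta>" using h1 le_imp_power_dvd dvd_trans by blast
  then have "p ^ (2*s+2) dvd 4 * (u1^2 - \<Delta>)" by (rule dvd_mult)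
  with e1 have "p ^ (2*s+2) dvd 4 * u1^2 - 4 * (u1^2 - \<Delta>)" using dvd_diff by blast
  then have "p ^ (2*s+2) dvd 4 * \<Delta>" by (simp add: algebra_simps)
  moreover have "p ^ (s+1) dvd p ^ (2*s+2)" by (rule le_imp_power_dvd) simp
  ultimately have "p ^ (s+1) dvd 4 * \<Delta>" using dvd_trans by blast
  moreover have "4 * \<Delta> \<noteq> 0" using D by simp
  ultimately have "s + 1 \<le> s" using pdvd_iff[OF p, of "4*\<Delta>" "s+1"] s_def by blast
  then show False by simp
qed

lemma res_identity_y:
  fixes a1 b1 c1 a2 b2 c2 x y :: int
  shows "res_form a1 b1 c1 a2 b2 c2 * y^3 =
     (a2*(a1*(2*b2) - a2*(2*b1)) * x + ((a1*(2*b2) - a2*(2*b1))*(2*b2) - a2*(a1*c2 - a2*c1)) * y) * qf a1 b1 c1 x y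
   + (- a1*(a1*(2*b2) - a2*(2*b1)) * x + (a1*(a1*c2 - a2*c1) - (2*b1)*(a1*(2*b2) - a2*(2*b1))) * y) * qf a2 b2 c2 x y"
  unfolding res_form_def qf_def by algebra

lemma res_identity_x:
  fixes a1 b1 c1 a2 b2 c2 x y :: int
  shows "res_form a1 b1 c1 a2 b2 c2 * x^3 =
     (c2*(-((2*b1)*c2 - (2*b2)*c1)) * y + ((-((2*b1)*c2 - (2*b2)*c1))*(2*b2) - c2*(-(a1*c2 - a2*c1))) * x) * qf a1 b1 c1 x y
   + (- c1*(-((2*b1)*c2 - (2*b2)*c1)) * y + (c1*(-(a1*c2 - a2*c1)) - (2*b1)*(-((2*b1)*c2 - (2*b2)*c1))) * x) * qf a2 b2 c2 x y"
  unfolding res_form_def qf_def by algebra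

lemma res_dvd:
  fixes p a1 b1 c1 a2 b2 c2 x y :: int
  assumes p: "prime p" and h1: "p ^ k dvd qf a1 b1 c1 x y" and h2: "p ^ k dvd qf a2 b2 c2 x y"
    and np: "\<not> (p dvd x \<and> p dvd y)"
  shows "p ^ k dvd res_form a1 b1 c1 a2 b2 c2"
proof -
  have dy: "p ^ k dvd res_form a1 b1 c1 a2 b2 c2 * y^3"
    by (subst res_identity_y) (rule dvd_add[OF dvd_mult[OF h1] dvd_mult[OF h2]])
  have dx: "p ^ k dvd res_form a1 b1 c1 a2 b2 c2 * x^3"
    by (subst res_identity_x) (rule dvd_add[OF dvd_mult[OF h1] dvd_mult[OF h2]])
  show ?thesis
  proof (cases "p dvd y")
    case False
    then have "coprime p y" using p by (simp add: prime_imp_coprime)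
    then have "coprime (p^k) (y^3)" by simp
    then show ?thesis using dy coprime_dvd_mult_left_iff by blast
  next
    case True
    then have "\<not> p dvd x" using np by blast
    then have "coprime p x" using p by (simp add: prime_imp_coprime)
    then have "coprime (p^k) (x^3)" by simp
    then show ?thesis using dx coprime_dvd_mult_left_iff by blast
  qed
qed

lemma class_card:
  fixes M N z :: int
  assumes "M > 0" "M dvd N" "N \<ge> 0"
  shows "int (card {x \<in> {0..<N}. M dvd x - z}) * M \<le> N"
proof -
  let ?C = "{x \<in> {0..<N}. M dvd x - z}"
  have inj: "inj_on (\<lambda>x. x div M) ?C"
  proof (rule inj_onI)
    fix x x' assume x: "x \<in> ?C" and x': "x' \<in> ?C" and eq: "x div M = x' div M"
    have "x mod M = z mod M" using x by (auto simp: mod_eq_dvd_iff)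
    moreover have "x' mod M = z mod M" using x' by (auto simp: mod_eq_dvd_iff)
    ultimately have "x mod M = x' mod M" by simp
    then show "x = x'" using eq by (metis div_mult_mod_eq)
  qed
  have sub: "(\<lambda>x. x div M) ` ?C \<subseteq> {0..<N div M}"
  proof
    fix w assume "w \<in> (\<lambda>x. x div M) ` ?C"
    then obtain x where x: "x \<in> ?C" "w = x div M" by blast
    then have "0 \<le> x" "x < N" by auto
    then have "0 \<le> w" using x assms by (simp add: pos_imp_zdiv_nonneg_iff)
    moreover have "w < N div M"
    proof -
      obtain k where k: "N = M * k" using assms(2) by blast
      have "x < M * k" using \<open>x < N\<close> k by simp
      have "x div M < k"
      proof (rule ccontr)
        assume "\<not> x div M < k"
        then have "M * k \<le> M * (x div M)" using assms(1) by (intro mult_left_mono) auto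
        also have "\<dots> \<le> x" using assms(1) mult_div_mod_eq[of M x] pos_mod_sign[of M x] by linarith
        finally show False using \<open>x < M * k\<close> by simp
      qed
      then show ?thesis using k x assms(1) by simp
    qed
    ultimately show "w \<in> {0..<N div M}" by simp
  qed
  have "card ?C = card ((\<lambda>x. x div M) ` ?C)" using inj by (simp add: card_image)
  also have "\<dots> \<le> card {0..<N div M}" using sub by (intro card_mono) auto
  also have "card {0..<N div M} = nat (N div M)" by simp
  finally have "int (card ?C) \<le> int (nat (N div M))" by (simp only: of_nat_le_iff)
  moreover have "0 \<le> N div M" using assms by (simp add: pos_imp_zdiv_nonneg_iff)
  ultimately have "int (card ?C) \<le> N div M" by simp
  then have "int (card ?C) * M \<le> (N div M) * M" using assms(1) by simp
  also have "\<dots> = N" using assms(2) by simp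
  finally show ?thesis .
qed


lemma qf_identity: "a * qf a b c x y = (a*x + b*y)^2 - (b^2 - a*c) * y^2"
  unfolding qf_def by (simp add: algebra_simps power2_eq_square)

lemma count1:
  fixes p a b c y N :: int and e E :: nat
  assumes p: "prime p" and a0: "a \<noteq> 0" and d0: "b^2 - a*c \<noteq> 0" and py: "\<not> p dvd y"
    and N: "N = p ^ E" and eE: "e \<le> E"
  shows "int (card {x \<in> {0..<N}. p ^ e dvd qf a b c x y}) * p ^ e \<le> 8 * \<bar>b^2 - a*c\<bar> * N"
proof -
  define \<Delta> where "\<Delta> = (b^2 - a*c) * y^2"
  define s where "s = multiplicity p (4*\<Delta>)"
  define v where "v = multiplicity p a"
  define X where "X = {x \<in> {0..<N}. p ^ e dvd qf a b c x y}"
  define M where "M = p ^ (e - s)"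
  define C where "C = (\<lambda>z. {x \<in> {0..<N}. M dvd x - z})"
  have p2: "p \<ge> 2" using p by (simp add: prime_ge_2_int)
  have y0: "y \<noteq> 0" using py by auto
  have D0: "\<Delta> \<noteq> 0" using d0 y0 by (simp add: \<Delta>_def)
  have N0: "N \<ge> 0" using N p2 by simp
  have M0: "M > 0" using p2 by (simp add: M_def)
  have MN: "M dvd N" unfolding M_def N using eE by (intro le_imp_power_dvd) simp
  have Cc: "int (card (C z)) * M \<le> N" for z
    unfolding C_def using class_card[OF M0 MN N0] .
  have pv: "p ^ v dvd a" unfolding v_def by (rule multiplicity_dvd)
  have inX: "p ^ (e + v) dvd (a*x + b*y)^2 - \<Delta>" if "x \<in> X" for x
  proof -
    have "p ^ e * p ^ v dvd qf a b c x y * a" using that pv by (intro mult_dvd_mono) (auto simp: X_def)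
    then show ?thesis using qf_identity[of a b c x y] by (simp add: power_add \<Delta>_def mult.commute)
  qed
  have canc: "M dvd z" if "p ^ (e + v - s) dvd a * z" for z
  proof (cases "s \<le> e")
    case False
    then show ?thesis by (simp add: M_def)
  next
    case True
    have "(e - s) + v \<le> e + v - s" using True by arith
    then have "p ^ ((e - s) + v) dvd p ^ (e + v - s)" by (rule le_imp_power_dvd)
    then have "p ^ ((e - s) + v) dvd a * z" using that dvd_trans by blast
    then show ?thesis unfolding M_def using cancel_pow[OF p a0] v_def by blast
  qed
  have claim: "M dvd x1 - x2 \<or> p ^ (e + v - s) dvd (a*x1 + b*y) + (a*x2 + b*y)"
    if "x1 \<in> X" "x2 \<in> X" for x1 x2
  proof -
    from sqrt_lemma[OF p D0 inX[OF that(1)] inX[OF that(2)]]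
    have "p ^ (e + v - s) dvd (a*x1 + b*y) - (a*x2 + b*y) \<or> p ^ (e + v - s) dvd (a*x1 + b*y) + (a*x2 + b*y)"
      by (simp add: s_def)
    moreover have "(a*x1 + b*y) - (a*x2 + b*y) = a * (x1 - x2)" by (simp add: algebra_simps)
    ultimately show ?thesis using canc by auto
  qed
  have two: "M dvd x3 - x2"
    if "p ^ (e + v - s) dvd (a*x1 + b*y) + (a*x2 + b*y)" "p ^ (e + v - s) dvd (a*x1 + b*y) + (a*x3 + b*y)"
    for x1 x2 x3
  proof -
    have "p ^ (e + v - s) dvd ((a*x1 + b*y) + (a*x3 + b*y)) - ((a*x1 + b*y) + (a*x2 + b*y))"
      using that by (rule dvd_diff[rotated])
    moreover have "((a*x1 + b*y) + (a*x3 + b*y)) - ((a*x1 + b*y) + (a*x2 + b*y)) = a * (x3 - x2)"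
      by (simp add: algebra_simps)
    ultimately show ?thesis using canc by simp
  qed
  have XN: "X \<subseteq> {0..<N}" by (auto simp: X_def)
  have finC: "finite (C z)" for z unfolding C_def by (rule finite_subset[of _ "{0..<N}"]) auto
  have cardX: "int (card X) * M \<le> 2 * N"
  proof (cases "X = {}")
    case True then show ?thesis using N0 by simp
  next
    case False
    then obtain x1 where x1: "x1 \<in> X" by blast
    show ?thesis
    proof (cases "X \<subseteq> C x1")
      case True
      then have "card X \<le> card (C x1)" using finC by (intro card_mono) auto
      then have "int (card X) * M \<le> int (card (C x1)) * M" using M0 by simp
      then show ?thesis using Cc[of x1] N0 by linarith
    next
      case False
      then obtain x2 where x2: "x2 \<in> X" "x2 \<notin> C x1" by blast
      have "\<not> M dvd x2 - x1" using x2 XN by (auto simp: C_def)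
      then have "\<not> M dvd x1 - x2" by (simp add: dvd_diff_commute)
      then have s2: "p ^ (e + v - s) dvd (a*x1 + b*y) + (a*x2 + b*y)" using claim[OF x1 x2(1)] by blast
      have "X \<subseteq> C x1 \<union> C x2"
      proof
        fix x3 assume x3: "x3 \<in> X"
        show "x3 \<in> C x1 \<union> C x2"
        proof (cases "M dvd x1 - x3")
          case True
          then have "M dvd x3 - x1" by (simp add: dvd_diff_commute)
          then show ?thesis using x3 XN by (auto simp: C_def)
        next
          case False
          then have "p ^ (e + v - s) dvd (a*x1 + b*y) + (a*x3 + b*y)" using claim[OF x1 x3] by blast
          then have "M dvd x3 - x2" using two[OF s2] by blast
          then show ?thesis using x3 XN by (auto simp: C_def)
        qed
      qed
      then have "card X \<le> card (C x1 \<union> C x2)" using finC by (intro card_mono) auto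
      also have "\<dots> \<le> card (C x1) + card (C x2)" by (rule card_Un_le)
      finally have "int (card X) * M \<le> (int (card (C x1)) + int (card (C x2))) * M"
        using M0 by (intro mult_right_mono) auto
      then show ?thesis using Cc[of x1] Cc[of x2] by (simp add: algebra_simps)
    qed
  qed
  have ps: "p ^ s \<le> 4 * \<bar>b^2 - a*c\<bar>"
  proof -
    have "p ^ s dvd 4 * ((b^2 - a*c) * y^2)" unfolding s_def \<Delta>_def by (rule multiplicity_dvd)
    then have "p ^ s dvd 4 * (b^2 - a*c) * y^2" by (simp only: mult.assoc)
    moreover have "coprime (p ^ s) (y^2)" using p py by (simp add: prime_imp_coprime)
    ultimately have "p ^ s dvd 4 * (b^2 - a*c)" using coprime_dvd_mult_left_iff by blast
    then have A: "\<bar>p ^ s\<bar> \<le> \<bar>4 * (b^2 - a*c)\<bar>" using d0 by (intro dvd_imp_le_int) auto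
    have B: "\<bar>4 * (b^2 - a*c)\<bar> = 4 * \<bar>b^2 - a*c\<bar>" by (subst abs_mult) simp
    have C: "\<bar>p ^ s\<bar> = p ^ s" using p2 by simp
    show ?thesis using A B C by linarith
  qed
  have pe: "p ^ e \<le> M * p ^ s"
  proof -
    have "p ^ e \<le> p ^ ((e - s) + s)" using p2 by (intro power_increasing) auto
    then show ?thesis by (simp add: M_def power_add)
  qed
  have "int (card X) * p ^ e \<le> int (card X) * (M * p ^ s)" using pe by (intro mult_left_mono) auto
  also have "\<dots> = (int (card X) * M) * p ^ s" by (simp add: algebra_simps)
  also have "\<dots> \<le> (2 * N) * (4 * \<bar>b^2 - a*c\<bar>)"
    by (rule mult_mono[OF cardX ps]) (use N0 p2 in auto)
  finally show ?thesis unfolding X_def by (simp add: algebra_simps)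
qed


lemma qf_swap: "qf c b a y x = qf a b c x y"
  unfolding qf_def by (simp add: algebra_simps)

lemma sum_bound:
  fixes Y :: "int set" and f :: "int \<Rightarrow> nat" and K N :: int
  assumes "Y \<subseteq> {0..<N}" "\<And>y. y \<in> Y \<Longrightarrow> int (f y) * q \<le> K" "K \<ge> 0" "N \<ge> 0"
  shows "int (\<Sum>y\<in>Y. f y) * q \<le> N * K"
proof -
  have fin: "finite Y" using assms(1) finite_subset by blast
  have "int (\<Sum>y\<in>Y. f y) * q = (\<Sum>y\<in>Y. int (f y) * q)" by (simp add: sum_distrib_right)
  also have "\<dots> \<le> (\<Sum>y\<in>Y. K)" using assms(2) by (intro sum_mono) auto
  also have "\<dots> = int (card Y) * K" by simp
  also have "\<dots> \<le> N * K"
  proof -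
    have "card Y \<le> card {0..<N}" using assms(1) by (intro card_mono) auto
    then have "int (card Y) \<le> N" using assms(4) by simp
    then show ?thesis using assms(3) by (intro mult_right_mono) auto
  qed
  finally show ?thesis .
qed

lemma count2:
  fixes p a b c N :: int and e E :: nat
  assumes p: "prime p" and a0: "a \<noteq> 0" and c0: "c \<noteq> 0" and d0: "b^2 - a*c \<noteq> 0"
    and N: "N = p ^ E" and eE: "e \<le> E"
  shows "int (card {(x, y) \<in> {0..<N} \<times> {0..<N}. p ^ e dvd qf a b c x y \<and> \<not> (p dvd x \<and> p dvd y)})
          * p ^ e \<le> 16 * \<bar>b^2 - a*c\<bar> * N^2"
proof -
  define Y where "Y = {y \<in> {0..<N}. \<not> p dvd y}"
  define XY where "XY = (\<lambda>y. {x \<in> {0..<N}. p ^ e dvd qf a b c x y})"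
  define X where "X = {x \<in> {0..<N}. \<not> p dvd x}"
  define YX where "YX = (\<lambda>x. {y \<in> {0..<N}. p ^ e dvd qf c b a y x})"
  define A1 where "A1 = (\<lambda>(y, x). (x, y)) ` (SIGMA y:Y. XY y)"
  define A2 where "A2 = (SIGMA x:X. YX x)"
  define K where "K = 8 * \<bar>b^2 - a*c\<bar> * N"
  have N0: "N \<ge> 0" using N p by (simp add: prime_ge_0_int)
  have K0: "K \<ge> 0" using N0 by (simp add: K_def)
  have d0': "b^2 - c*a \<noteq> 0" using d0 by (simp add: mult.commute)
  have sub: "{(x, y) \<in> {0..<N} \<times> {0..<N}. p ^ e dvd qf a b c x y \<and> \<not> (p dvd x \<and> p dvd y)} \<subseteq> A1 \<union> A2"
  proof
    fix z assume z: "z \<in> {(x, y) \<in> {0..<N} \<times> {0..<N}. p ^ e dvd qf a b c x y \<and> \<not> (p dvd x \<and> p dvd y)}"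
    obtain x y where xy: "z = (x, y)" by fastforce
    show "z \<in> A1 \<union> A2"
    proof (cases "p dvd y")
      case False
      then have "(y, x) \<in> (SIGMA y:Y. XY y)" using z xy by (auto simp: Y_def XY_def)
      then have "(x, y) \<in> A1" unfolding A1_def by (auto intro: image_eqI[where x="(y,x)"])
      then show ?thesis using xy by simp
    next
      case True
      then have "(x, y) \<in> A2" using z xy by (auto simp: A2_def X_def YX_def qf_swap)
      then show ?thesis using xy by simp
    qed
  qed
  have finY: "finite Y" "finite X" unfolding Y_def X_def
    by (rule finite_subset[of _ "{0..<N}"]; auto)+
  have finXY: "\<And>y. finite (XY y)" "\<And>x. finite (YX x)" unfolding XY_def YX_def
    by (rule finite_subset[of _ "{0..<N}"]; auto)+
  have c1: "int (card A1) * p ^ e \<le> N * K"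
  proof -
    have "card A1 \<le> card (SIGMA y:Y. XY y)" unfolding A1_def by (rule card_image_le) (simp add: finY finXY)
    also have "\<dots> = (\<Sum>y\<in>Y. card (XY y))" using finY finXY by (simp add: card_SigmaI)
    finally have "int (card A1) \<le> int (\<Sum>y\<in>Y. card (XY y))" by (simp only: of_nat_le_iff)
    then have "int (card A1) * p ^ e \<le> int (\<Sum>y\<in>Y. card (XY y)) * p ^ e"
      using p by (intro mult_right_mono) (auto simp: prime_ge_0_int)
    also have "\<dots> \<le> N * K"
    proof (rule sum_bound[OF _ _ K0 N0])
      show "Y \<subseteq> {0..<N}" by (auto simp: Y_def)
      fix y assume y: "y \<in> Y"
      show "int (card (XY y)) * p ^ e \<le> K"
        unfolding XY_def K_def by (rule count1[OF p a0 d0 _ N eE]) (use y in \<open>simp add: Y_def\<close>)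
    qed
    finally show ?thesis .
  qed
  have c2: "int (card A2) * p ^ e \<le> N * K"
  proof -
    have "card A2 = (\<Sum>x\<in>X. card (YX x))" unfolding A2_def using finY finXY by (simp add: card_SigmaI)
    then have "int (card A2) * p ^ e = int (\<Sum>x\<in>X. card (YX x)) * p ^ e" by simp
    also have "\<dots> \<le> N * K"
    proof (rule sum_bound[OF _ _ K0 N0])
      show "X \<subseteq> {0..<N}" by (auto simp: X_def)
      fix x assume x: "x \<in> X"
      have "int (card (YX x)) * p ^ e \<le> 8 * \<bar>b^2 - c*a\<bar> * N"
        unfolding YX_def by (rule count1[OF p c0 d0' _ N eE]) (use x in \<open>simp add: X_def\<close>)
      then show "int (card (YX x)) * p ^ e \<le> K" by (simp add: K_def mult.commute[of c a])
    qed
    finally show ?thesis .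
  qed
  have fin12: "finite A1" "finite A2" using finY finXY by (auto simp: A1_def A2_def)
  have "card {(x, y) \<in> {0..<N} \<times> {0..<N}. p ^ e dvd qf a b c x y \<and> \<not> (p dvd x \<and> p dvd y)} \<le> card (A1 \<union> A2)"
    using sub fin12 by (intro card_mono) auto
  also have "\<dots> \<le> card A1 + card A2" by (rule card_Un_le)
  finally have "int (card {(x, y) \<in> {0..<N} \<times> {0..<N}. p ^ e dvd qf a b c x y \<and> \<not> (p dvd x \<and> p dvd y)}) * p ^ e
      \<le> (int (card A1) + int (card A2)) * p ^ e"
    using p by (intro mult_right_mono) (auto simp: prime_ge_0_int)
  also have "\<dots> \<le> N * K + N * K" using c1 c2 by (simp add: algebra_simps)
  also have "\<dots> = 16 * \<bar>b^2 - a*c\<bar> * N^2" by (simp add: K_def power2_eq_square algebra_simps)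
  finally show ?thesis .
qed


lemma res_sym: "res_form a1 b1 c1 a2 b2 c2 = res_form a2 b2 c2 a1 b1 c1"
  unfolding res_form_def by algebra

lemma D_facts:
  fixes g :: nat and a b c :: "nat \<Rightarrow> int"
  assumes D0: "D_const g a b c \<noteq> 0"
  shows "\<And>k. k < g \<Longrightarrow> a k \<noteq> 0 \<and> c k \<noteq> 0 \<and> b k ^ 2 - a k * c k \<noteq> 0
            \<and> \<bar>b k ^ 2 - a k * c k\<bar> \<le> \<bar>D_const g a b c\<bar>"
    and "\<And>i j. i < g \<Longrightarrow> j < g \<Longrightarrow> i \<noteq> j \<Longrightarrow>
            res_form (a i) (b i) (c i) (a j) (b j) (c j) dvd D_const g a b c"
proof -
  define P1 where "P1 = (\<Prod>p\<in>{p::nat. prime p \<and> p \<le> 2 * g}. int p)"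
  define P2 where "P2 = (\<Prod>k<g. a k * c k * disc_form (a k) (b k) (c k))"
  define P3 where "P3 = (\<Prod>(i, j)\<in>{(i, j). i < j \<and> j < g}.
          res_form (a i) (b i) (c i) (a j) (b j) (c j))"
  have Deq: "D_const g a b c = P1 * P2 * P3" unfolding D_const_def P1_def P2_def P3_def by simp
  have P2d: "P2 dvd D_const g a b c" unfolding Deq by simp
  have P3d: "P3 dvd D_const g a b c" unfolding Deq by simp
  {
    fix k assume k: "k < g"
    have kd: "a k * c k * disc_form (a k) (b k) (c k) dvd P2" unfolding P2_def using k
      by (intro dvd_prodI) auto
    then have "a k * c k * disc_form (a k) (b k) (c k) dvd D_const g a b c" using P2d dvd_trans by blast
    then have nz: "a k * c k * disc_form (a k) (b k) (c k) \<noteq> 0" using D0 by auto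
    have dd: "disc_form (a k) (b k) (c k) = 4 * (b k ^ 2 - a k * c k)" by (simp add: disc_form_def algebra_simps power2_eq_square)
    have "disc_form (a k) (b k) (c k) dvd D_const g a b c"
      using \<open>a k * c k * disc_form (a k) (b k) (c k) dvd D_const g a b c\<close> dvd_trans dvd_triv_right by blast
    then have "\<bar>disc_form (a k) (b k) (c k)\<bar> \<le> \<bar>D_const g a b c\<bar>" using D0 by (intro dvd_imp_le_int) auto
    then have "\<bar>b k ^ 2 - a k * c k\<bar> \<le> \<bar>D_const g a b c\<bar>" unfolding dd by (simp add: abs_mult)
    then show "a k \<noteq> 0 \<and> c k \<noteq> 0 \<and> b k ^ 2 - a k * c k \<noteq> 0
            \<and> \<bar>b k ^ 2 - a k * c k\<bar> \<le> \<bar>D_const g a b c\<bar>" using nz dd by auto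
  }
  {
    fix i j assume ij: "i < g" "j < g" "i \<noteq> j"
    have fin: "finite {(i, j). i < j \<and> j < (g::nat)}"
      by (rule finite_subset[of _ "{..<g} \<times> {..<g}"]) auto
    have "res_form (a (min i j)) (b (min i j)) (c (min i j)) (a (max i j)) (b (max i j)) (c (max i j)) dvd P3"
      unfolding P3_def using ij
      by (intro dvd_prodI[OF fin, of "(min i j, max i j)" "\<lambda>(i, j). res_form (a i) (b i) (c i) (a j) (b j) (c j)", simplified]) auto
    then have "res_form (a (min i j)) (b (min i j)) (c (min i j)) (a (max i j)) (b (max i j)) (c (max i j)) dvd D_const g a b c"
      using P3d dvd_trans by blast
    then show "res_form (a i) (b i) (c i) (a j) (b j) (c j) dvd D_const g a b c"
      by (cases "i < j") (auto simp: min_def max_def res_sym)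
  }
qed


lemma rho_eq:
  "rho_star g a b c (\<lambda>i. p ^ e i) =
   card {(x, y) \<in> {0..<int p ^ (\<Sum>i<g. e i)} \<times> {0..<int p ^ (\<Sum>i<g. e i)}.
      (\<forall>i<g. int p ^ e i dvd qf (a i) (b i) (c i) x y) \<and> gcd (gcd x y) (int p ^ (\<Sum>i<g. e i)) = 1}"
  unfolding rho_star_def Let_def by (simp add: power_sum)

lemma prim:
  fixes P x y :: int
  assumes "prime P" "E > 0" "gcd (gcd x y) (P ^ E) = 1"
  shows "\<not> (P dvd x \<and> P dvd y)"
proof
  assume h: "P dvd x \<and> P dvd y"
  have "P dvd P ^ E" using assms(2) by (simp add: dvd_power)
  then have "P dvd gcd (gcd x y) (P ^ E)" using h by simp
  then have "P dvd 1" using assms(3) by simp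
  then show False using assms(1) not_prime_unit by blast
qed

lemma part1:
  fixes g :: nat and a b c :: "nat \<Rightarrow> int" and p :: nat and e :: "nat \<Rightarrow> nat"
  assumes D0: "D_const g a b c \<noteq> 0" and g1: "g \<ge> 1" and p: "prime p"
  shows "int (rho_star g a b c (\<lambda>i. p ^ e i))
           \<le> 16 * \<bar>D_const g a b c\<bar> ^ (2*g) * int p ^ Max (e ` {..<g})"
proof -
  note DF = D_facts[OF D0]
  define D where "D = D_const g a b c"
  define P where "P = int p"
  define E where "E = (\<Sum>i<g. e i)"
  define N where "N = P ^ E"
  define m where "m = Max (e ` {..<g})"
  define S where "S = {(x, y) \<in> {0..<N} \<times> {0..<N}.
      (\<forall>i<g. P ^ e i dvd qf (a i) (b i) (c i) x y) \<and> gcd (gcd x y) N = 1}"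
  have rho: "rho_star g a b c (\<lambda>i. p ^ e i) = card S"
    unfolding rho_eq S_def N_def E_def P_def ..
  have Pp: "prime P" using p by (simp add: P_def)
  have P2: "P \<ge> 2" using Pp by (simp add: prime_ge_2_int)
  have D1: "\<bar>D\<bar> \<ge> 1" using D0 by (simp add: D_def)
  have Pm: "P ^ m > 0" using P2 by simp
  have rhs1: "1 \<le> 16 * \<bar>D\<bar> ^ (2*g) * P ^ m"
  proof -
    have h1: "1 \<le> \<bar>D\<bar> ^ (2*g)" using D1 by simp
    have h2: "1 \<le> P ^ m" using Pm by simp
    have "1 * 1 \<le> \<bar>D\<bar> ^ (2*g) * P ^ m" using h1 h2 by (intro mult_mono) auto
    then show ?thesis by simp
  qed
  have finS: "finite S" unfolding S_def
    by (rule finite_subset[of _ "{0..<N} \<times> {0..<N}"]) auto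
  obtain j where j: "j < g" "e j = m"
  proof -
    have "e 0 \<in> e ` {..<g}" using g1 by simp
    then have "m \<in> e ` {..<g}" unfolding m_def by (intro Max_in) auto
    then show ?thesis using that by auto
  qed
  have le_m: "e i \<le> m" if "i < g" for i unfolding m_def using that by (intro Max_ge) auto
  have mE: "m \<le> E" unfolding E_def j(2)[symmetric] using j(1) by (intro member_le_sum) auto
  show ?thesis
  proof (cases "E = 0")
    case True
    then have "S \<subseteq> {0..<1} \<times> {0..<1}" by (auto simp: S_def N_def)
    then have "card S \<le> card ({0..<1::int} \<times> {0..<1::int})" by (intro card_mono) auto
    then have "card S \<le> 1" by simp
    then show ?thesis using rhs1 rho by (simp add: D_def P_def m_def)
  next
    case False
    then have E0: "E > 0" by simp
    show ?thesis
    proof (cases "S = {}")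
      case True
      then show ?thesis using rho rhs1 by (simp add: D_def P_def m_def)
    next
      case False
      then obtain x0 y0 where xy0: "(x0, y0) \<in> S" by auto
      have "gcd (gcd x0 y0) (P ^ E) = 1" using xy0 unfolding S_def N_def by (simp only: mem_Collect_eq prod.case; blast)
      then have np0: "\<not> (P dvd x0 \<and> P dvd y0)" by (rule prim[OF Pp E0])
      have eiD: "P ^ e i \<le> \<bar>D\<bar>" if i: "i < g" "i \<noteq> j" for i
      proof -
        have h1: "P ^ e i dvd qf (a i) (b i) (c i) x0 y0" using xy0 i by (auto simp: S_def)
        have "P ^ e i dvd P ^ e j" using le_m[OF i(1)] j by (intro le_imp_power_dvd) auto
        moreover have "P ^ e j dvd qf (a j) (b j) (c j) x0 y0" using xy0 j by (auto simp: S_def)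
        ultimately have h2: "P ^ e i dvd qf (a j) (b j) (c j) x0 y0" by (rule dvd_trans)
        have "P ^ e i dvd res_form (a i) (b i) (c i) (a j) (b j) (c j)"
          by (rule res_dvd[OF Pp h1 h2 np0])
        then have "P ^ e i dvd D" using DF(2)[OF i(1) j(1) i(2)] dvd_trans unfolding D_def by blast
        then have "\<bar>P ^ e i\<bar> \<le> \<bar>D\<bar>" using D0 by (intro dvd_imp_le_int) (auto simp: D_def)
        then show ?thesis by simp
      qed
      define F where "F = (\<Sum>i\<in>{..<g} - {j}. e i)"
      have EF: "E = m + F" unfolding E_def F_def j(2)[symmetric] using j(1) by (intro sum.remove) auto
      have PF: "P ^ F \<le> \<bar>D\<bar> ^ (g - 1)"
      proof -
        have "P ^ F = (\<Prod>i\<in>{..<g} - {j}. P ^ e i)" unfolding F_def by (simp add: power_sum)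
        also have "\<dots> \<le> (\<Prod>i\<in>{..<g} - {j}. \<bar>D\<bar>)" using eiD P2 by (intro prod_mono) auto
        also have "\<dots> = \<bar>D\<bar> ^ (g - 1)" using j by simp
        finally show ?thesis .
      qed
      have abc: "a j \<noteq> 0" "c j \<noteq> 0" "b j ^ 2 - a j * c j \<noteq> 0" "\<bar>b j ^ 2 - a j * c j\<bar> \<le> \<bar>D\<bar>"
        using DF(1)[OF j(1)] by (auto simp: D_def)
      define T where "T = {(x, y) \<in> {0..<N} \<times> {0..<N}. P ^ m dvd qf (a j) (b j) (c j) x y \<and> \<not> (P dvd x \<and> P dvd y)}"
      have ST: "S \<subseteq> T"
      proof
        fix z assume z: "z \<in> S"
        obtain x y where xy: "z = (x, y)" by fastforce
        have "gcd (gcd x y) (P ^ E) = 1" using z xy unfolding S_def N_def by (simp only: mem_Collect_eq prod.case; blast)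
        then have "\<not> (P dvd x \<and> P dvd y)" by (rule prim[OF Pp E0])
        moreover have "P ^ m dvd qf (a j) (b j) (c j) x y" using z xy j by (auto simp: S_def)
        ultimately show "z \<in> T" using z xy by (auto simp: S_def T_def)
      qed
      have finT: "finite T" unfolding T_def
        by (rule finite_subset[of _ "{0..<N} \<times> {0..<N}"]) auto
      have "card S \<le> card T" using ST finT by (rule card_mono[rotated])
      then have "int (card S) * P ^ m \<le> int (card T) * P ^ m" using Pm by (intro mult_right_mono) auto
      also have "\<dots> \<le> 16 * \<bar>b j ^ 2 - a j * c j\<bar> * N^2"
        unfolding T_def by (rule count2[OF Pp abc(1,2,3) N_def mE])
      also have "\<dots> \<le> 16 * \<bar>D\<bar> * ((\<bar>D\<bar> ^ (g - 1))^2 * P ^ m * P ^ m)"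
      proof -
        have "N = P ^ m * P ^ F" unfolding N_def EF by (rule power_add)
        then have "N^2 = (P ^ F)^2 * (P ^ m * P ^ m)" by (simp only: power2_eq_square mult_ac)
        also have "\<dots> \<le> (\<bar>D\<bar> ^ (g - 1))^2 * (P ^ m * P ^ m)"
        proof (rule mult_right_mono)
          show "(P ^ F)^2 \<le> (\<bar>D\<bar> ^ (g - 1))^2" using PF P2 by (intro power_mono) auto
          show "0 \<le> P ^ m * P ^ m" using Pm by simp
        qed
        finally have "N^2 \<le> (\<bar>D\<bar> ^ (g - 1))^2 * P ^ m * P ^ m" by (simp only: mult.assoc)
        then show ?thesis using abc(4) by (intro mult_mono) auto
      qed
      also have "\<dots> = (16 * (\<bar>D\<bar> * (\<bar>D\<bar> ^ (g - 1))^2) * P ^ m) * P ^ m"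
        by (simp only: mult_ac)
      finally have "int (card S) \<le> 16 * (\<bar>D\<bar> * (\<bar>D\<bar> ^ (g - 1))^2) * P ^ m"
        using Pm by (rule mult_right_le_imp_le)
      also have "\<dots> \<le> 16 * \<bar>D\<bar> ^ (2*g) * P ^ m"
      proof -
        have "\<bar>D\<bar> * (\<bar>D\<bar> ^ (g - 1))^2 = \<bar>D\<bar> ^ (1 + (g - 1) * 2)"
          by (simp only: power_add power_mult power_one_right)
        also have "\<dots> \<le> \<bar>D\<bar> ^ (2*g)" using D1 g1 by (intro power_increasing) auto
        finally have "\<bar>D\<bar> * (\<bar>D\<bar> ^ (g - 1))^2 \<le> \<bar>D\<bar> ^ (2*g)" .
        then show ?thesis using Pm by (intro mult_right_mono) auto
      qed
      finally show ?thesis using rho by (simp add: D_def P_def m_def)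
    qed
  qed
qed

lemma part2:
  fixes g :: nat and a b c :: "nat \<Rightarrow> int" and p :: nat and e :: "nat \<Rightarrow> nat"
  assumes D0: "D_const g a b c \<noteq> 0" and p: "prime p" and nd: "\<not> int p dvd D_const g a b c"
    and ij: "i < g" "j < g" "i \<noteq> j" "e i > 0" "e j > 0"
  shows "rho_star g a b c (\<lambda>i. p ^ e i) = 0"
proof -
  note DF = D_facts[OF D0]
  define P where "P = int p"
  define E where "E = (\<Sum>i<g. e i)"
  define N where "N = P ^ E"
  define S where "S = {(x, y) \<in> {0..<N} \<times> {0..<N}.
      (\<forall>i<g. P ^ e i dvd qf (a i) (b i) (c i) x y) \<and> gcd (gcd x y) N = 1}"
  have rho: "rho_star g a b c (\<lambda>i. p ^ e i) = card S"
    unfolding rho_eq S_def N_def E_def P_def ..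
  have Pp: "prime P" using p by (simp add: P_def)
  have "e i \<le> E" unfolding E_def using ij(1) by (intro member_le_sum) auto
  then have E0: "E > 0" using ij by simp
  have "S = {}"
  proof (rule ccontr)
    assume "S \<noteq> {}"
    then obtain x0 y0 where xy0: "(x0, y0) \<in> S" by auto
    have "gcd (gcd x0 y0) (P ^ E) = 1" using xy0 unfolding S_def N_def by (simp only: mem_Collect_eq prod.case; blast)
    then have np0: "\<not> (P dvd x0 \<and> P dvd y0)" by (rule prim[OF Pp E0])
    have allq: "\<forall>i<g. P ^ e i dvd qf (a i) (b i) (c i) x0 y0" using xy0 unfolding S_def N_def by (simp only: mem_Collect_eq prod.case; blast)
    have "P ^ 1 dvd P ^ e i" using ij by (intro le_imp_power_dvd) auto
    then have h1: "P ^ 1 dvd qf (a i) (b i) (c i) x0 y0" using allq ij dvd_trans by blast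
    have "P ^ 1 dvd P ^ e j" using ij by (intro le_imp_power_dvd) auto
    then have h2: "P ^ 1 dvd qf (a j) (b j) (c j) x0 y0" using allq ij dvd_trans by blast
    have "P ^ 1 dvd res_form (a i) (b i) (c i) (a j) (b j) (c j)" by (rule res_dvd[OF Pp h1 h2 np0])
    then have "P dvd D_const g a b c" using DF(2)[OF ij(1,2,3)] dvd_trans by auto
    then show False using nd by (simp add: P_def)
  qed
  then show ?thesis using rho by simp
qed

theorem lemma2p3:
  fixes g :: nat and a b c :: "nat \<Rightarrow> int"
  assumes "g \<ge> 2"
    and "\<And>i. i < g \<Longrightarrow> form_irreducible (a i) (b i) (c i)"
    and "\<And>i. i < g \<Longrightarrow> a i mod 4 = 1"
    and "D_const g a b c \<noteq> 0"
  shows "(\<exists>C::real. \<forall>p::nat. \<forall>e::nat \<Rightarrow> nat. prime p \<longrightarrow>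
            real (rho_star g a b c (\<lambda>i. p ^ e i)) \<le> C * real p ^ Max (e ` {..<g}))
       \<and> (\<forall>p::nat. \<forall>e::nat \<Rightarrow> nat. prime p \<longrightarrow> \<not> int p dvd D_const g a b c \<longrightarrow>
            (\<exists>i<g. \<exists>j<g. i \<noteq> j \<and> e i > 0 \<and> e j > 0) \<longrightarrow>
            rho_star g a b c (\<lambda>i. p ^ e i) = 0)"
proof (intro conjI)
  show "\<exists>C::real. \<forall>p::nat. \<forall>e::nat \<Rightarrow> nat. prime p \<longrightarrow>
            real (rho_star g a b c (\<lambda>i. p ^ e i)) \<le> C * real p ^ Max (e ` {..<g})"
  proof (intro exI allI impI)
    fix p :: nat and e :: "nat \<Rightarrow> nat"
    assume p: "prime p"
    have g1: "g \<ge> 1" using assms(1) by simp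
    have "int (rho_star g a b c (\<lambda>i. p ^ e i))
           \<le> 16 * \<bar>D_const g a b c\<bar> ^ (2*g) * int p ^ Max (e ` {..<g})"
      by (rule part1[OF assms(4) g1 p])
    then have "real_of_int (int (rho_star g a b c (\<lambda>i. p ^ e i)))
           \<le> real_of_int (16 * \<bar>D_const g a b c\<bar> ^ (2*g) * int p ^ Max (e ` {..<g}))"
      by (rule of_int_le_iff[THEN iffD2])
    then show "real (rho_star g a b c (\<lambda>i. p ^ e i))
        \<le> (16 * real_of_int \<bar>D_const g a b c\<bar> ^ (2*g)) * real p ^ Max (e ` {..<g})"
      by simp
  qed
next
  show "\<forall>p::nat. \<forall>e::nat \<Rightarrow> nat. prime p \<longrightarrow> \<not> int p dvd D_const g a b c \<longrightarrow>
            (\<exists>i<g. \<exists>j<g. i \<noteq> j \<and> e i > 0 \<and> e j > 0) \<longrightarrow>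
            rho_star g a b c (\<lambda>i. p ^ e i) = 0"
    using part2[OF assms(4)] by blast
qed

end
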